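(* Let $n\ge3$, $1\le j\le n-2$ and $K\in\mathcal K^n$. Then $$\operatorname{ext}(K[j],B_L^{n-1}[n-1-j])=\{z\in\mathbb S^{n-1}:\exists E\in G(\ell,j+1)\text{ such that }z\in\operatorname{ext}_E(\operatorname{proj}_EK)\}.$$
   Context: $\mathcal K^n$ is the set of convex bodies in $\mathbb R^n$; $\ell=\operatorname{span}\{e_n\}$, $L=\ell^\perp$, $B_L^{n-1}=B^n\cap L$; $K[m]$ means $K$ repeated $m$ times; $G(\ell,m)=\{E\in G(n,m):\ell\subseteq E\}$; $\operatorname{proj}_E$ is orthogonal projection. For $K\in\mathcal K^n$, $z\ne o$: $F(K,z)=\{x\in K:\langle x,z\rangle=h_K(z)\}$; $N(K,x)$ is the normal cone at $x\in\partial K$ and $N(K,F)=N(K,x)$ for $x$ in the relative interior of a nonempty convex $F\subseteq K$; the touching cone $T(K,z)$ is the unique face of $N(K,F(K,z))$ containing $z$ in its relative interior. $z\in\mathbb S^{n-1}$ is $(K_1,\dots,K_{n-1})$-extreme if there exist linear hyperplanes $E_i\supseteq T(K_i,z)$, $i=1,\dots,n-1$, with $\dim(E_1\cap\dots\cap E_{n-1})=1$; $\operatorname{ext}(K_1,\dots,K_{n-1})$ is the set of such $z$. For a convex body $M$ in a linear subspace $E$, $\operatorname{ext}_E(M)$ is the set of unit vectors $z\in E$ that are outer normals of $M$ (relative to $E$) at some boundary point $x$ and cannot be written as a sum of two linearly independent outer normal vectors of $M$ at $x$ in $E$. *)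

theory Defs
  imports "HOL-Analysis.Analysis"
begin

definition convex_body :: "'a::euclidean_space set \<Rightarrow> bool" where
  "convex_body K \<longleftrightarrow> K \<noteq> {} \<and> compact K \<and> convex K"

definition supp_fun :: "'a::euclidean_space set \<Rightarrow> 'a \<Rightarrow> real" where
  "supp_fun K z = Sup ((\<lambda>x. x \<bullet> z) ` K)"

definition supp_set :: "'a::euclidean_space set \<Rightarrow> 'a \<Rightarrow> 'a set" where
  "supp_set K z = {x \<in> K. x \<bullet> z = supp_fun K z}"

definition normal_cone :: "'a::euclidean_space set \<Rightarrow> 'a \<Rightarrow> 'a set" where
  "normal_cone K x = {u. \<forall>y\<in>K. u \<bullet> (y - x) \<le> 0}"

definition normal_cone_face :: "'a::euclidean_space set \<Rightarrow> 'a set \<Rightarrow> 'a set" where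
  "normal_cone_face K F = normal_cone K (SOME x. x \<in> rel_interior F)"

definition touching_cone :: "'a::euclidean_space set \<Rightarrow> 'a \<Rightarrow> 'a set" where
  "touching_cone K z =
     (THE G. G face_of normal_cone_face K (supp_set K z) \<and> z \<in> rel_interior G)"

definition lin_hyperplane :: "'a::euclidean_space set \<Rightarrow> bool" where
  "lin_hyperplane E \<longleftrightarrow> subspace E \<and> dim E = DIM('a) - 1"

text \<open>ext(K_0,...,K_{n-2}) for a family of n-1 convex bodies indexed by 0..n-2.\<close>
definition ext_mixed :: "(nat \<Rightarrow> 'a::euclidean_space set) \<Rightarrow> 'a set" where
  "ext_mixed Ks = {z. norm z = 1 \<and>
     (\<exists>Es. (\<forall>i < DIM('a) - 1. lin_hyperplane (Es i) \<and> touching_cone (Ks i) z \<subseteq> Es i)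
           \<and> dim (\<Inter>i\<in>{..<DIM('a) - 1}. Es i) = 1)}"

text \<open>Grassmannian G(span{u}, m) of m-dim linear subspaces containing u.\<close>
definition grass_thru :: "'a::euclidean_space \<Rightarrow> nat \<Rightarrow> 'a set set" where
  "grass_thru u m = {E. subspace E \<and> dim E = m \<and> u \<in> E}"

definition proj_onto :: "'a::euclidean_space set \<Rightarrow> 'a \<Rightarrow> 'a" where
  "proj_onto E x = (THE y. y \<in> E \<and> (\<forall>w\<in>E. (x - y) \<bullet> w = 0))"

definition ext_rel :: "'a::euclidean_space set \<Rightarrow> 'a set \<Rightarrow> 'a set" where
  "ext_rel E M = {z. z \<in> E \<and> norm z = 1 \<and>
     (\<exists>x \<in> M. \<not> (\<exists>e>0. ball x e \<inter> E \<subseteq> M) \<and>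
        z \<in> normal_cone M x \<and>
        \<not> (\<exists>u v. u \<in> normal_cone M x \<inter> E \<and> v \<in> normal_cone M x \<inter> E \<and>
               u \<noteq> v \<and> independent {u, v} \<and> z = u + v))}"

end

theory Submission
  imports Defs
begin


definition Dir :: "'a::euclidean_space set \<Rightarrow> 'a \<Rightarrow> 'a set" where
  "Dir C z = {d. \<exists>\<epsilon>>0. z + \<epsilon> *\<^sub>R d \<in> C \<and> z - \<epsilon> *\<^sub>R d \<in> C}"

locale ccone =
  fixes C :: "'a::euclidean_space set"
  assumes add: "\<And>a b. a \<in> C \<Longrightarrow> b \<in> C \<Longrightarrow> a + b \<in> C"
    and scale: "\<And>a c. a \<in> C \<Longrightarrow> c \<ge> 0 \<Longrightarrow> c *\<^sub>R a \<in> C"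
    and nonempty: "C \<noteq> {}"
begin

lemma zero: "0 \<in> C"
  using nonempty scale[of _ 0] by auto

lemma cvx: "convex C"
  unfolding convex_def
  by (intro ballI allI impI) (simp add: add scale)

lemma Dir_small:
  assumes "d \<in> Dir C z" "z \<in> C"
  obtains \<epsilon> where "\<epsilon> > 0" "\<And>t. \<bar>t\<bar> \<le> \<epsilon> \<Longrightarrow> z + t *\<^sub>R d \<in> C"
proof -
  obtain \<epsilon> where e: "\<epsilon> > 0" "z + \<epsilon> *\<^sub>R d \<in> C" "z - \<epsilon> *\<^sub>R d \<in> C"
    using assms unfolding Dir_def by auto
  have "z + t *\<^sub>R d \<in> C" if "\<bar>t\<bar> \<le> \<epsilon>" for t
  proof (cases "t \<ge> 0")
    case True
    have "z + t *\<^sub>R d = (1 - t/\<epsilon>) *\<^sub>R z + (t/\<epsilon>) *\<^sub>R (z + \<epsilon> *\<^sub>R d)"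
      using e by (simp add: algebra_simps)
    moreover have "(1 - t/\<epsilon>) *\<^sub>R z + (t/\<epsilon>) *\<^sub>R (z + \<epsilon> *\<^sub>R d) \<in> C"
      using True that e assms by (intro add[OF scale scale]) auto
    ultimately show ?thesis by simp
  next
    case False
    have "z + t *\<^sub>R d = (1 + t/\<epsilon>) *\<^sub>R z + (-t/\<epsilon>) *\<^sub>R (z - \<epsilon> *\<^sub>R d)"
      using e by (simp add: algebra_simps)
    moreover have "(1 + t/\<epsilon>) *\<^sub>R z + (-t/\<epsilon>) *\<^sub>R (z - \<epsilon> *\<^sub>R d) \<in> C"
      using False that e assms by (intro add[OF scale scale]) (auto simp: field_simps)
    ultimately show ?thesis by simp
  qed
  with e show ?thesis using that by blast
qed

lemma Dir_I:
  assumes "e > 0" "\<And>t. \<bar>t\<bar> \<le> e \<Longrightarrow> z + t *\<^sub>R d \<in> C"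
  shows "d \<in> Dir C z"
  unfolding Dir_def using assms(1) assms(2)[of e] assms(2)[of "-e"] by (auto intro!: exI[of _ e])

lemma Dir_subspace:
  assumes "z \<in> C"
  shows "subspace (Dir C z)"
  unfolding subspace_def
proof (intro conjI ballI allI)
  show "0 \<in> Dir C z" using assms unfolding Dir_def by (auto intro: exI[of _ 1])
next
  fix x y assume x: "x \<in> Dir C z" and y: "y \<in> Dir C z"
  obtain e1 where e1: "e1 > 0" "\<And>t. \<bar>t\<bar> \<le> e1 \<Longrightarrow> z + t *\<^sub>R x \<in> C"
    using Dir_small[OF x assms] by blast
  obtain e2 where e2: "e2 > 0" "\<And>t. \<bar>t\<bar> \<le> e2 \<Longrightarrow> z + t *\<^sub>R y \<in> C"
    using Dir_small[OF y assms] by blast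
  define e where "e = min e1 e2 / 2"
  have ep: "e > 0" using e1 e2 by (simp add: e_def)
  have "z + s *\<^sub>R (x + y) \<in> C" if "\<bar>s\<bar> \<le> e" for s
  proof -
    have "z + s *\<^sub>R (x + y) = (1/2) *\<^sub>R (z + (2 * s) *\<^sub>R x) + (1/2) *\<^sub>R (z + (2 * s) *\<^sub>R y)"
      by (simp add: algebra_simps flip: scaleR_add_left)
    moreover have "\<bar>2 * s\<bar> \<le> e1" "\<bar>2 * s\<bar> \<le> e2" using that by (auto simp: e_def)
    ultimately show ?thesis using e1 e2 by (simp add: add[OF scale scale])
  qed
  then show "x + y \<in> Dir C z" using ep by (rule Dir_I[rotated])
next
  fix c x assume x: "x \<in> Dir C z"
  obtain e1 where e1: "e1 > 0" "\<And>t. \<bar>t\<bar> \<le> e1 \<Longrightarrow> z + t *\<^sub>R x \<in> C"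
    using Dir_small[OF x assms] by blast
  define e where "e = e1 / (\<bar>c\<bar> + 1)"
  have ep: "e > 0" using e1 by (simp add: e_def)
  have "z + s *\<^sub>R (c *\<^sub>R x) \<in> C" if "\<bar>s\<bar> \<le> e" for s
  proof -
    have "\<bar>s * c\<bar> \<le> e * (\<bar>c\<bar> + 1)"
      using that by (simp add: abs_mult) (smt (verit) ep mult_left_mono mult_right_mono abs_ge_zero)
    also have "\<dots> = e1" using e1 by (simp add: e_def)
    finally show ?thesis using e1(2)[of "s*c"] by simp
  qed
  then show "c *\<^sub>R x \<in> Dir C z" using ep by (rule Dir_I[rotated])
qed

lemma z_Dir: "z \<in> C \<Longrightarrow> z \<in> Dir C z"
proof -
  assume z: "z \<in> C"
  have "z + t *\<^sub>R z \<in> C" if "\<bar>t\<bar> \<le> 1/2" for t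
  proof -
    have "z + t *\<^sub>R z = (1 + t) *\<^sub>R z" by (simp add: algebra_simps)
    then show ?thesis using that z scale[of z "1+t"] by auto
  qed
  then show ?thesis by (intro Dir_I[of "1/2"]) auto
qed

definition G where "G z = C \<inter> Dir C z"

lemma G_face: assumes "z \<in> C" shows "G z face_of C"
  unfolding face_of_def
proof (intro conjI ballI impI)
  show "G z \<subseteq> C" by (auto simp: G_def)
  show "convex (G z)" unfolding G_def
    by (intro convex_Int cvx subspace_imp_convex Dir_subspace assms)
next
  fix a b x assume a: "a \<in> C" and b: "b \<in> C" and x: "x \<in> G z" and seg: "x \<in> open_segment a b"
  obtain t where t: "0 < t" "t < 1" "x = (1 - t) *\<^sub>R a + t *\<^sub>R b"
    using seg by (auto simp: in_segment)
  obtain e where e: "e > 0" "\<And>s. \<bar>s\<bar> \<le> e \<Longrightarrow> z + s *\<^sub>R x \<in> C"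
    using Dir_small[of x z] x assms by (auto simp: G_def)
  have gen: "w \<in> Dir C z" if w: "w \<in> C" and wc: "z - (e*c) *\<^sub>R w \<in> C" and c: "0 < c" "c \<le> 1" for w c
  proof (rule Dir_I[of "e*c"])
    show "0 < e*c" using e c by simp
    fix s assume s: "\<bar>s\<bar> \<le> e*c"
    show "z + s *\<^sub>R w \<in> C"
    proof (cases "s \<ge> 0")
      case True
      then show ?thesis using add[OF assms scale[OF w True]] by simp
    next
      case False
      have ec: "e*c > 0" using e c by simp
      have "(1 + s/(e*c)) *\<^sub>R z + (-s/(e*c)) *\<^sub>R (z - (e*c) *\<^sub>R w) = z + s *\<^sub>R w"
        using e(1) c by (simp add: algebra_simps)
      then have "z + s *\<^sub>R w = (1 + s/(e*c)) *\<^sub>R z + (-s/(e*c)) *\<^sub>R (z - (e*c) *\<^sub>R w)" by simp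
      moreover have "-1 \<le> s/(e*c)" using s ec by (simp add: le_divide_eq)
      then have "1 + s/(e*c) \<ge> 0" by simp
      moreover have "-s/(e*c) \<ge> 0" using False ec by (simp add: divide_nonpos_pos)
      ultimately show ?thesis using wc assms add[OF scale scale] by metis
    qed
  qed
  have xa: "z - (e*(1-t)) *\<^sub>R a = (z - e *\<^sub>R x) + (e*t) *\<^sub>R b"
    unfolding t(3) by (simp add: algebra_simps)
  have xb: "z - (e*t) *\<^sub>R b = (z - e *\<^sub>R x) + (e*(1-t)) *\<^sub>R a"
    unfolding t(3) by (simp add: algebra_simps)
  have zx: "z - e *\<^sub>R x \<in> C" using e(2)[of "-e"] e(1) by simp
  have "a \<in> Dir C z"
  proof (rule gen[OF a, of "1-t"])
    show "z - (e * (1 - t)) *\<^sub>R a \<in> C" unfolding xa using zx b t e(1) by (auto intro!: add scale)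
  qed (use t in auto)
  moreover have "b \<in> Dir C z"
  proof (rule gen[OF b, of "t"])
    show "z - (e * t) *\<^sub>R b \<in> C" unfolding xb using zx a t e(1) by (auto intro!: add scale)
  qed (use t in auto)
  ultimately show "a \<in> G z" "b \<in> G z" using a b by (auto simp: G_def)
qed

lemma G_relint: assumes "z \<in> C" shows "z \<in> rel_interior (G z)"
proof -
  have sub: "subspace (Dir C z)" by (rule Dir_subspace[OF assms])
  have zG: "z \<in> G z" using assms z_Dir by (auto simp: G_def)
  have cG: "convex (G z)" unfolding G_def
    by (intro convex_Int cvx subspace_imp_convex Dir_subspace assms)
  have ne: "G z \<noteq> {}" using zG by auto
  show ?thesis
    unfolding convex_rel_interior_iff[OF cG, of z, OF ne]
  proof (intro ballI)
    fix x assume x: "x \<in> G z"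
    obtain \<epsilon> where e: "\<epsilon> > 0" "\<And>t. \<bar>t\<bar> \<le> \<epsilon> \<Longrightarrow> z + t *\<^sub>R x \<in> C"
      using Dir_small[of x z] x assms by (auto simp: G_def)
    define \<delta> where "\<delta> = min \<epsilon> (1/2)"
    have d: "0 < \<delta>" "\<delta> \<le> \<epsilon>" "\<delta> < 1" using e by (auto simp: \<delta>_def)
    define ee where "ee = 1 / (1 - \<delta>)"
    have ee1: "ee > 1" using d by (simp add: ee_def)
    have eq: "(1 - ee) *\<^sub>R x + ee *\<^sub>R z = ee *\<^sub>R (z + (-\<delta>) *\<^sub>R x)"
    proof -
      have "1 - ee = ee * (-\<delta>)" using d by (simp add: ee_def field_simps)
      then show ?thesis by (simp only:) (simp add: algebra_simps)
    qed
    have "ee *\<^sub>R (z + (-\<delta>) *\<^sub>R x) \<in> C"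
      using ee1 e(2)[of "-\<delta>"] d by (intro scale) auto
    moreover have "ee *\<^sub>R (z + (-\<delta>) *\<^sub>R x) \<in> Dir C z"
      using sub z_Dir[OF assms] x
      by (intro subspace_scale[OF sub] subspace_add[OF sub]) (auto simp: G_def)
    ultimately show "\<exists>e>1. (1 - e) *\<^sub>R x + e *\<^sub>R z \<in> G z"
      using ee1 eq by (auto simp: G_def)
  qed
qed

lemma span_G: assumes "z \<in> C" shows "span (G z) = Dir C z"
proof
  have sub: "subspace (Dir C z)" by (rule Dir_subspace[OF assms])
  show "span (G z) \<subseteq> Dir C z" by (rule span_minimal) (auto simp: G_def sub)
  show "Dir C z \<subseteq> span (G z)"
  proof
    fix d assume d: "d \<in> Dir C z"
    obtain \<epsilon> where e: "\<epsilon> > 0" "z + \<epsilon> *\<^sub>R d \<in> C" "z - \<epsilon> *\<^sub>R d \<in> C"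
      using d unfolding Dir_def by auto
    have "z + \<epsilon> *\<^sub>R d \<in> G z" "z - \<epsilon> *\<^sub>R d \<in> G z"
      using e d z_Dir[OF assms] sub
      by (auto simp: G_def intro!: subspace_add subspace_diff subspace_scale)
    then have "(1/(2*\<epsilon>)) *\<^sub>R ((z + \<epsilon> *\<^sub>R d) - (z - \<epsilon> *\<^sub>R d)) \<in> span (G z)"
      by (intro span_scale span_diff span_base)
    moreover have "(1/(2*\<epsilon>)) *\<^sub>R ((z + \<epsilon> *\<^sub>R d) - (z - \<epsilon> *\<^sub>R d)) = d"
      using e(1) by (simp add: algebra_simps flip: scaleR_add_left)
    ultimately show "d \<in> span (G z)" by simp
  qed
qed

lemma face_unique:
  assumes "z \<in> C"
  shows "(THE F. F face_of C \<and> z \<in> rel_interior F) = G z"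
proof (rule the_equality)
  show "G z face_of C \<and> z \<in> rel_interior (G z)" using G_face G_relint assms by blast
  fix F assume F: "F face_of C \<and> z \<in> rel_interior F"
  then show "F = G z"
    using face_of_eq[of F C "G z"] G_face G_relint assms by blast
qed

end



lemma nc_ccone: "ccone (normal_cone K x)"
proof
  fix a b assume "a \<in> normal_cone K x" "b \<in> normal_cone K x"
  then show "a + b \<in> normal_cone K x"
    by (auto simp: normal_cone_def inner_add_left intro: add_nonpos_nonpos)
next
  fix a and c :: real assume "a \<in> normal_cone K x" "c \<ge> 0"
  then show "c *\<^sub>R a \<in> normal_cone K x"
    by (auto simp: normal_cone_def mult_nonneg_nonpos)
next
  show "normal_cone K x \<noteq> {}" by (auto simp: normal_cone_def intro!: exI[of _ 0])
qed

lemma supp_max: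
  fixes K :: "'a::euclidean_space set"
  assumes "convex_body K"
  obtains x where "x \<in> K" "\<And>y. y \<in> K \<Longrightarrow> y \<bullet> z \<le> x \<bullet> z"
proof -
  have "compact ((\<lambda>x. x \<bullet> z) ` K)"
    using assms by (intro compact_continuous_image continuous_intros) (auto simp: convex_body_def)
  moreover have "(\<lambda>x. x \<bullet> z) ` K \<noteq> {}" using assms by (auto simp: convex_body_def)
  ultimately obtain s where "s \<in> (\<lambda>x. x \<bullet> z) ` K" "\<forall>t\<in>(\<lambda>x. x \<bullet> z) ` K. t \<le> s"
    using compact_attains_sup by blast
  then show ?thesis using that by auto
qed

lemma supp_fun_eq:
  assumes "x \<in> K" "\<And>y. y \<in> K \<Longrightarrow> y \<bullet> z \<le> x \<bullet> z"
  shows "supp_fun K z = x \<bullet> z"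
  unfolding supp_fun_def using assms by (intro cSup_eq_maximum) auto

lemma supp_set_iff:
  fixes K :: "'a::euclidean_space set"
  assumes "convex_body K"
  shows "x \<in> supp_set K z \<longleftrightarrow> x \<in> K \<and> z \<in> normal_cone K x"
proof
  assume x: "x \<in> supp_set K z"
  obtain x0 where x0: "x0 \<in> K" "\<And>y. y \<in> K \<Longrightarrow> y \<bullet> z \<le> x0 \<bullet> z" using supp_max assms by blast
  have "supp_fun K z = x0 \<bullet> z" by (rule supp_fun_eq[OF x0])
  with x x0 show "x \<in> K \<and> z \<in> normal_cone K x"
    by (auto simp: supp_set_def normal_cone_def inner_diff_right inner_commute)
next
  assume x: "x \<in> K \<and> z \<in> normal_cone K x"
  then have "\<And>y. y \<in> K \<Longrightarrow> y \<bullet> z \<le> x \<bullet> z"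
    by (auto simp: normal_cone_def inner_diff_right inner_commute)
  then show "x \<in> supp_set K z" using x supp_fun_eq[of x K z] by (auto simp: supp_set_def)
qed

lemma supp_set_ne:
  assumes "convex_body K" shows "supp_set K z \<noteq> {}"
proof -
  obtain x0 where x0: "x0 \<in> K" "\<And>y. y \<in> K \<Longrightarrow> y \<bullet> z \<le> x0 \<bullet> z" using supp_max assms by blast
  then show ?thesis using supp_fun_eq[OF x0] by (auto simp: supp_set_def)
qed

lemma supp_set_convex:
  assumes "convex_body K" shows "convex (supp_set K z)"
proof -
  have "supp_set K z = K \<inter> {x. z \<bullet> x = supp_fun K z}"
    by (auto simp: supp_set_def inner_commute)
  then show ?thesis using assms by (auto simp: convex_body_def intro!: convex_Int convex_hyperplane)
qed

lemma Dir_nc_sub: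
  fixes K :: "'a::euclidean_space set"
  assumes K: "convex_body K" and x: "x \<in> supp_set K z" and x': "x' \<in> supp_set K z"
  shows "Dir (normal_cone K x) z \<subseteq> Dir (normal_cone K x') z"
proof
  fix d assume "d \<in> Dir (normal_cone K x) z"
  then obtain \<epsilon> where e: "\<epsilon> > 0" "z + \<epsilon> *\<^sub>R d \<in> normal_cone K x" "z - \<epsilon> *\<^sub>R d \<in> normal_cone K x"
    unfolding Dir_def by auto
  have xK: "x' \<in> K" using x' by (auto simp: supp_set_def)
  have zz: "z \<bullet> (x' - x) = 0" using x x' by (auto simp: supp_set_def inner_diff_right inner_commute)
  have "(z + \<epsilon> *\<^sub>R d) \<bullet> (x' - x) \<le> 0" "(z - \<epsilon> *\<^sub>R d) \<bullet> (x' - x) \<le> 0"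
    using e xK by (auto simp: normal_cone_def)
  then have dd: "d \<bullet> (x' - x) = 0" using zz e(1)
    by (simp add: inner_add_left inner_diff_left)
  have "w \<bullet> (y - x') \<le> 0" if "w \<in> normal_cone K x" "y \<in> K" "w \<bullet> (x' - x) = 0" for w y
  proof -
    have "y - x' = (y - x) - (x' - x)" by simp
    then have "w \<bullet> (y - x') = w \<bullet> (y - x) - w \<bullet> (x' - x)" by (simp add: inner_diff_right)
    then show ?thesis using that by (auto simp: normal_cone_def)
  qed
  moreover have "(z + \<epsilon> *\<^sub>R d) \<bullet> (x' - x) = 0" "(z - \<epsilon> *\<^sub>R d) \<bullet> (x' - x) = 0"
    using zz dd by (auto simp: inner_add_left inner_diff_left)
  ultimately have "z + \<epsilon> *\<^sub>R d \<in> normal_cone K x'" "z - \<epsilon> *\<^sub>R d \<in> normal_cone K x'"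
    using e by (auto simp: normal_cone_def)
  then show "d \<in> Dir (normal_cone K x') z" using e(1) unfolding Dir_def by auto
qed

lemma Dir_nc_eq:
  fixes K :: "'a::euclidean_space set"
  assumes K: "convex_body K" and x: "x \<in> supp_set K z" and x': "x' \<in> supp_set K z"
  shows "Dir (normal_cone K x) z = Dir (normal_cone K x') z"
  using Dir_nc_sub[OF K x x'] Dir_nc_sub[OF K x' x] by blast

lemma span_touching:
  fixes K :: "'a::euclidean_space set"
  assumes K: "convex_body K" and x: "x \<in> supp_set K z"
  shows "span (touching_cone K z) = Dir (normal_cone K x) z"
proof -
  define F where "F = supp_set K z"
  define x0 where "x0 = (SOME x. x \<in> rel_interior F)"
  have "rel_interior F \<noteq> {}"
    using supp_set_ne[OF K, of z] rel_interior_eq_empty[OF supp_set_convex[OF K, of z]] by (auto simp: F_def)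
  then have "x0 \<in> rel_interior F" unfolding x0_def by (auto intro: someI)
  then have x0F: "x0 \<in> F" using rel_interior_subset by blast
  have nf: "normal_cone_face K (supp_set K z) = normal_cone K x0"
    by (simp add: normal_cone_face_def x0_def F_def)
  interpret ccone "normal_cone K x0" by (rule nc_ccone)
  have z: "z \<in> normal_cone K x0" using x0F supp_set_iff[OF K] by (auto simp: F_def)
  have "touching_cone K z = G z"
    unfolding touching_cone_def nf by (rule face_unique[OF z])
  then have "span (touching_cone K z) = Dir (normal_cone K x0) z" using span_G[OF z] by simp
  also have "\<dots> = Dir (normal_cone K x) z" using x0F x unfolding F_def by (rule Dir_nc_eq[OF K])
  finally show ?thesis .
qed

lemma BL_body:
  fixes e :: "'a::euclidean_space"
  shows "convex_body (cball 0 1 \<inter> {x. x \<bullet> e = 0})"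
  unfolding convex_body_def
proof (intro conjI)
  have "(0::'a) \<in> cball 0 1 \<inter> {x. x \<bullet> e = 0}" by simp
  then show "cball 0 1 \<inter> {x. x \<bullet> e = 0} \<noteq> {}" by blast
  have "closed {x::'a. x \<bullet> e = 0}" using closed_hyperplane[of e 0] by (simp add: inner_commute)
  then show "compact (cball 0 1 \<inter> {x. x \<bullet> e = 0})" by (intro compact_Int_closed) auto
  have "convex {x::'a. x \<bullet> e = 0}" using convex_hyperplane[of e 0] by (simp add: inner_commute)
  then show "convex (cball 0 1 \<inter> {x. x \<bullet> e = 0})" by (intro convex_Int) auto
qed

lemma nc_BL_in:
  fixes e p :: "'a::euclidean_space"
  assumes "norm e = 1" "p \<bullet> e = 0" "norm p = 1" "\<beta> \<ge> 0"
  shows "\<alpha> *\<^sub>R e + \<beta> *\<^sub>R p \<in> normal_cone (cball 0 1 \<inter> {x. x \<bullet> e = 0}) p"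
  unfolding normal_cone_def
proof (intro CollectI ballI)
  fix y assume y: "y \<in> cball 0 1 \<inter> {x. x \<bullet> e = 0}"
  have "p \<bullet> y \<le> norm p * norm y" by (rule norm_cauchy_schwarz)
  also have "\<dots> \<le> 1" using y assms by auto
  finally have py: "p \<bullet> y \<le> 1" .
  have "(\<alpha> *\<^sub>R e + \<beta> *\<^sub>R p) \<bullet> (y - p) = \<beta> * (p \<bullet> y - 1)"
  proof -
    have f: "e \<bullet> y = 0" "e \<bullet> p = 0" "p \<bullet> p = 1"
      using y assms by (auto simp: inner_commute norm_eq_1)
    show ?thesis by (simp add: inner_add_left inner_diff_right f algebra_simps)
  qed
  also have "\<dots> \<le> 0" using py assms by (simp add: mult_nonneg_nonpos)
  finally show "(\<alpha> *\<^sub>R e + \<beta> *\<^sub>R p) \<bullet> (y - p) \<le> 0" .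
qed

lemma nc_Bp:
  fixes e p u :: "'a::euclidean_space"
  assumes ee: "norm e = 1" and pe: "p \<bullet> e = 0" and pp: "norm p = 1"
    and u: "u \<in> normal_cone (cball 0 1 \<inter> {x. x \<bullet> e = 0}) p"
  shows "u = (u \<bullet> e) *\<^sub>R e + (u \<bullet> p) *\<^sub>R p"
proof (rule ccontr)
  assume ne: "u \<noteq> (u \<bullet> e) *\<^sub>R e + (u \<bullet> p) *\<^sub>R p"
  define q where "q = u - (u \<bullet> e) *\<^sub>R e - (u \<bullet> p) *\<^sub>R p"
  have e1: "e \<bullet> e = 1" and p1: "p \<bullet> p = 1" and ep: "e \<bullet> p = 0"
    using ee pp pe by (auto simp: norm_eq_1 inner_commute)
  have qe: "q \<bullet> e = 0" and qp: "q \<bullet> p = 0"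
    by (simp_all add: q_def inner_diff_left e1 p1 ep pe)
  have eq: "e \<bullet> q = 0" "p \<bullet> q = 0" using qe qp by (simp_all add: inner_commute)
  have uq: "u \<bullet> q = q \<bullet> q"
  proof -
    have "u = q + (u \<bullet> e) *\<^sub>R e + (u \<bullet> p) *\<^sub>R p" by (simp add: q_def)
    then have "u \<bullet> q = (q + (u \<bullet> e) *\<^sub>R e + (u \<bullet> p) *\<^sub>R p) \<bullet> q" by simp
    also have "\<dots> = q \<bullet> q" by (simp add: inner_add_left eq)
    finally show ?thesis .
  qed
  have q0: "q \<noteq> 0"
  proof
    assume "q = 0"
    then have "u - (u \<bullet> e) *\<^sub>R e = (u \<bullet> p) *\<^sub>R p" unfolding q_def by (rule right_minus_eq[THEN iffD1])
    then show False using ne by (metis diff_eq_eq add.commute)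
  qed
  then have qq: "q \<bullet> q > 0" by simp
  define t where "t = 1 / (norm q + \<bar>u \<bullet> p\<bar> + 1)"
  have dpos: "norm q + \<bar>u \<bullet> p\<bar> + 1 > 0" by (smt (verit) norm_ge_zero abs_ge_zero)
  have tpos: "t > 0" using dpos by (simp add: t_def)
  have tq: "t * norm q < 1" unfolding t_def using dpos by (simp add: field_simps)
  have tu: "t * (u \<bullet> p) < 1"
  proof -
    have "t * (u \<bullet> p) \<le> t * \<bar>u \<bullet> p\<bar>" using tpos by (simp add: mult_left_mono)
    also have "\<dots> = \<bar>u \<bullet> p\<bar> / (norm q + \<bar>u \<bullet> p\<bar> + 1)" by (simp add: t_def)
    also have "\<dots> < 1"
    proof -
      have nq: "0 \<le> norm q" by simp
      show ?thesis by (subst divide_less_eq_1_pos) (use dpos nq in linarith)+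
    qed
    finally show ?thesis .
  qed
  define a where "a = t^2 * (q \<bullet> q)"
  have a_eq: "a = (t * norm q)^2" by (simp add: a_def power_mult_distrib power2_norm_eq_inner)
  have a0: "0 \<le> a" "a \<le> 1"
  proof -
    show "0 \<le> a" by (simp add: a_eq)
    have "t * norm q \<ge> 0" using tpos by simp
    then have "(t * norm q)^2 \<le> 1^2" using tq by (intro power_mono) auto
    then show "a \<le> 1" by (simp add: a_eq)
  qed
  define y where "y = (1 - a) *\<^sub>R p + t *\<^sub>R q"
  have ye: "y \<bullet> e = 0" by (simp add: y_def inner_add_left pe qe)
  have yy: "y \<bullet> y = (1 - a)^2 + a"
    by (simp add: y_def inner_add_left inner_add_right p1 qp eq a_def power2_eq_square algebra_simps)
  have "y \<bullet> y \<le> 1"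
  proof -
    have "(1 - a)^2 + a = 1 - a * (1 - a)" by (simp add: power2_eq_square algebra_simps)
    also have "\<dots> \<le> 1" using a0 by (simp add: mult_nonneg_nonneg)
    finally show ?thesis using yy by simp
  qed
  then have "norm y \<le> 1" by (simp add: norm_eq_sqrt_inner)
  then have yB: "y \<in> cball 0 1 \<inter> {x. x \<bullet> e = 0}" using ye by simp
  have "u \<bullet> (y - p) = t * (q \<bullet> q) * (1 - t * (u \<bullet> p))"
    by (simp add: y_def inner_diff_right inner_add_right uq a_def power2_eq_square algebra_simps)
  also have "\<dots> > 0" using tpos qq tu by simp
  finally have "u \<bullet> (y - p) > 0" .
  moreover have "u \<bullet> (y - p) \<le> 0" using u yB unfolding normal_cone_def by blast
  ultimately show False by linarith
qed

lemma nc_B0: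
  fixes e u :: "'a::euclidean_space"
  assumes ee: "norm e = 1"
    and u: "u \<in> normal_cone (cball 0 1 \<inter> {x. x \<bullet> e = 0}) 0"
  shows "u = (u \<bullet> e) *\<^sub>R e"
proof (rule ccontr)
  assume ne: "u \<noteq> (u \<bullet> e) *\<^sub>R e"
  define q where "q = u - (u \<bullet> e) *\<^sub>R e"
  have e1: "e \<bullet> e = 1" using ee by (auto simp: norm_eq_1)
  have qe: "q \<bullet> e = 0" by (simp add: q_def inner_diff_left e1)
  have eq: "e \<bullet> q = 0" using qe by (simp add: inner_commute)
  have uq: "u \<bullet> q = q \<bullet> q"
  proof -
    have "u = q + (u \<bullet> e) *\<^sub>R e" by (simp add: q_def)
    then have "u \<bullet> q = (q + (u \<bullet> e) *\<^sub>R e) \<bullet> q" by simp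
    also have "\<dots> = q \<bullet> q" by (simp add: inner_add_left eq)
    finally show ?thesis .
  qed
  have q0: "q \<noteq> 0" using ne by (simp add: q_def)
  define y where "y = (1 / norm q) *\<^sub>R q"
  have yB: "y \<in> cball 0 1 \<inter> {x. x \<bullet> e = 0}" using q0 qe by (simp add: y_def)
  have "u \<bullet> (y - 0) = (q \<bullet> q) / norm q" by (simp add: y_def uq)
  also have "\<dots> > 0" using q0 by simp
  moreover have "u \<bullet> (y - 0) \<le> 0" using u yB unfolding normal_cone_def by blast
  ultimately show False by linarith
qed

lemma span_touching_BL:
  fixes e z :: "'a::euclidean_space"
  assumes ee: "norm e = 1"
  shows "span (touching_cone (cball 0 1 \<inter> {x. x \<bullet> e = 0}) z) = span {e, z}"
proof -
  define B where "B = cball 0 1 \<inter> {x::'a. x \<bullet> e = 0}"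
  have Bb: "convex_body B" unfolding B_def by (rule BL_body)
  have e1: "e \<bullet> e = 1" using ee by (simp add: norm_eq_1)
  define zL where "zL = z - (z \<bullet> e) *\<^sub>R e"
  have zLe: "zL \<bullet> e = 0" by (simp add: zL_def inner_diff_left e1)
  show ?thesis
  proof (cases "zL = 0")
    case True
    then have zeq: "z = (z \<bullet> e) *\<^sub>R e" by (simp add: zL_def)
    have ncin: "c *\<^sub>R e \<in> normal_cone B 0" for c
      by (auto simp: normal_cone_def B_def inner_commute)
    have z0: "z \<in> normal_cone B 0" using ncin[of "z \<bullet> e"] zeq by simp
    have "0 \<in> supp_set B z" using supp_set_iff[OF Bb] z0 by (simp add: B_def)
    then have sp: "span (touching_cone B z) = Dir (normal_cone B 0) z"
      by (rule span_touching[OF Bb])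
    interpret ccone "normal_cone B 0" by (rule nc_ccone)
    have "Dir (normal_cone B 0) z = span {e}"
    proof
      show "Dir (normal_cone B 0) z \<subseteq> span {e}"
      proof
        fix d assume "d \<in> Dir (normal_cone B 0) z"
        then obtain \<epsilon> where ep: "\<epsilon> > 0" "z + \<epsilon> *\<^sub>R d \<in> normal_cone B 0"
          unfolding Dir_def by auto
        have h: "z + \<epsilon> *\<^sub>R d = ((z + \<epsilon> *\<^sub>R d) \<bullet> e) *\<^sub>R e"
          using nc_B0[OF ee ep(2)[unfolded B_def]] .
        have "z + \<epsilon> *\<^sub>R d \<in> span {e}"
          by (rule ssubst[OF h, where P="\<lambda>v. v \<in> span {e}"]) (intro span_scale span_base, simp)
        moreover have "z \<in> span {e}"
          by (rule ssubst[OF zeq, where P="\<lambda>v. v \<in> span {e}"]) (intro span_scale span_base, simp)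
        ultimately have "(1/\<epsilon>) *\<^sub>R ((z + \<epsilon> *\<^sub>R d) - z) \<in> span {e}"
          by (intro span_scale span_diff)
        then show "d \<in> span {e}" using ep(1) by simp
      qed
      show "span {e} \<subseteq> Dir (normal_cone B 0) z"
      proof (rule span_minimal)
        show "subspace (Dir (normal_cone B 0) z)" by (rule Dir_subspace[OF z0])
        have "z + 1 *\<^sub>R e = (z \<bullet> e + 1) *\<^sub>R e" "z - 1 *\<^sub>R e = (z \<bullet> e - 1) *\<^sub>R e"
          by (rule trans[OF arg_cong[where f="\<lambda>v. v + 1 *\<^sub>R e", OF zeq]], simp add: algebra_simps)
             (rule trans[OF arg_cong[where f="\<lambda>v. v - 1 *\<^sub>R e", OF zeq]], simp add: algebra_simps)
        then have "e \<in> Dir (normal_cone B 0) z" unfolding Dir_def using ncin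
          by (intro CollectI exI[of _ 1]) simp
        then show "{e} \<subseteq> Dir (normal_cone B 0) z" by simp
      qed
    qed
    moreover have "span {e, z} = span {e}"
    proof -
      have "z \<in> span {e}"
          by (rule ssubst[OF zeq, where P="\<lambda>v. v \<in> span {e}"]) (intro span_scale span_base, simp)
      then have "span (insert z {e}) = span {e}" by (rule span_redundant)
      moreover have "insert z {e} = {e, z}" by auto
      ultimately show ?thesis by simp
    qed
    ultimately show ?thesis using sp by (simp add: B_def)
  next
    case False
    define nz where "nz = norm zL"
    have nzp: "nz > 0" using False by (simp add: nz_def)
    define p where "p = (1/nz) *\<^sub>R zL"
    have pe: "p \<bullet> e = 0" by (simp add: p_def zLe)
    have pp: "norm p = 1" using nzp by (simp add: p_def nz_def)
    define c where "c = z \<bullet> e"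
    have zeq: "z = c *\<^sub>R e + nz *\<^sub>R p"
      using nzp by (simp add: p_def zL_def c_def)
    have zp: "z \<in> normal_cone B p" unfolding B_def
      unfolding zeq by (rule nc_BL_in[OF ee pe pp]) (use nzp in simp)
    have pB: "p \<in> B" using pe pp by (simp add: B_def)
    have "p \<in> supp_set B z" using supp_set_iff[OF Bb] zp pB by simp
    then have sp: "span (touching_cone B z) = Dir (normal_cone B p) z"
      by (rule span_touching[OF Bb])
    interpret ccone "normal_cone B p" by (rule nc_ccone)
    have inspan: "a *\<^sub>R e + b *\<^sub>R p \<in> span {e, p}" for a b
      by (intro span_add span_scale span_base) auto
    have zinspan: "z \<in> span {e, p}"
      by (rule ssubst[OF zeq, where P="\<lambda>v. v \<in> span {e, p}"]) (rule inspan)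
    have "Dir (normal_cone B p) z = span {e, p}"
    proof
      show "Dir (normal_cone B p) z \<subseteq> span {e, p}"
      proof
        fix d assume "d \<in> Dir (normal_cone B p) z"
        then obtain \<epsilon> where ep: "\<epsilon> > 0" "z + \<epsilon> *\<^sub>R d \<in> normal_cone B p"
          unfolding Dir_def by auto
        have h: "z + \<epsilon> *\<^sub>R d = ((z + \<epsilon> *\<^sub>R d) \<bullet> e) *\<^sub>R e + ((z + \<epsilon> *\<^sub>R d) \<bullet> p) *\<^sub>R p"
          using nc_Bp[OF ee pe pp ep(2)[unfolded B_def]] .
        have "z + \<epsilon> *\<^sub>R d \<in> span {e, p}"
          by (rule ssubst[OF h, where P="\<lambda>v. v \<in> span {e, p}"]) (rule inspan)
        moreover have "z \<in> span {e, p}" using zinspan .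
        ultimately have "(1/\<epsilon>) *\<^sub>R ((z + \<epsilon> *\<^sub>R d) - z) \<in> span {e, p}"
          by (intro span_scale span_diff)
        then show "d \<in> span {e, p}" using ep(1) by simp
      qed
      show "span {e, p} \<subseteq> Dir (normal_cone B p) z"
      proof (rule span_minimal)
        show "subspace (Dir (normal_cone B p) z)" by (rule Dir_subspace[OF zp])
        have "z + 1 *\<^sub>R e = (c + 1) *\<^sub>R e + nz *\<^sub>R p" "z - 1 *\<^sub>R e = (c - 1) *\<^sub>R e + nz *\<^sub>R p"
          unfolding zeq by (simp_all add: algebra_simps)
        then have "e \<in> Dir (normal_cone B p) z" unfolding Dir_def B_def
          using nc_BL_in[OF ee pe pp] nzp
          by (intro CollectI exI[of _ 1]) simp
        moreover
        have "z + nz *\<^sub>R p = c *\<^sub>R e + (nz + nz) *\<^sub>R p" "z - nz *\<^sub>R p = c *\<^sub>R e + 0 *\<^sub>R p"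
          unfolding zeq by (simp_all add: algebra_simps flip: scaleR_add_left)
        then have "p \<in> Dir (normal_cone B p) z" unfolding Dir_def B_def
          using nc_BL_in[OF ee pe pp] nc_BL_in[OF ee pe pp, of 0 c, simplified] nzp
          by (intro CollectI exI[of _ nz]) simp
        ultimately show "{e, p} \<subseteq> Dir (normal_cone B p) z" by simp
      qed
    qed
    moreover have "span {e, p} = span {e, z}"
    proof (subst span_eq, intro conjI)
      show "{e, z} \<subseteq> span {e, p}" using zinspan span_base[of e "{e,p}"] by simp
      have "p = (1/nz) *\<^sub>R (z - (z \<bullet> e) *\<^sub>R e)" by (simp add: p_def zL_def c_def)
      moreover have "(1/nz) *\<^sub>R (z - (z \<bullet> e) *\<^sub>R e) \<in> span {e, z}"
        by (intro span_scale span_diff span_base) auto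
      ultimately have "p \<in> span {e, z}" by simp
      then show "{e, p} \<subseteq> span {e, z}" by (simp add: span_base)
    qed
    ultimately show ?thesis using sp by (simp add: B_def)
  qed
qed



lemma proj_props:
  fixes E :: "'a::euclidean_space set"
  assumes E: "subspace E"
  shows "proj_onto E x \<in> E \<and> (\<forall>w\<in>E. (x - proj_onto E x) \<bullet> w = 0)"
proof -
  obtain y z where yz: "y \<in> span E" "\<And>w. w \<in> span E \<Longrightarrow> orthogonal z w" "x = y + z"
    using orthogonal_subspace_decomp_exists by blast
  have P: "y \<in> E \<and> (\<forall>w\<in>E. (x - y) \<bullet> w = 0)"
  proof -
    have sE: "span E = E" using E by (simp add: span_eq_iff)
    show ?thesis using yz unfolding sE by (auto simp: orthogonal_def inner_commute)
  qed
  have "proj_onto E x = y" unfolding proj_onto_def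
  proof (rule the_equality)
    show "y \<in> E \<and> (\<forall>w\<in>E. (x - y) \<bullet> w = 0)" by (rule P)
    fix y' assume y': "y' \<in> E \<and> (\<forall>w\<in>E. (x - y') \<bullet> w = 0)"
    have "y - y' \<in> E" using P y' E by (simp add: subspace_diff)
    then have "(x - y') \<bullet> (y - y') = 0" "(x - y) \<bullet> (y - y') = 0" using P y' by auto
    then have "(y - y') \<bullet> (y - y') = 0"
      by (simp add: inner_diff_left inner_diff_right inner_commute)
    then show "y' = y" by simp
  qed
  then show ?thesis using P by simp
qed

lemma proj_inner:
  fixes E :: "'a::euclidean_space set"
  assumes E: "subspace E" and u: "u \<in> E"
  shows "u \<bullet> proj_onto E x = u \<bullet> x"
proof -
  have "(x - proj_onto E x) \<bullet> u = 0" using proj_props[OF E] u by blast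
  then have "u \<bullet> (x - proj_onto E x) = 0" by (simp add: inner_commute)
  then show ?thesis by (simp add: inner_diff_right)
qed

lemma nc_proj:
  fixes E :: "'a::euclidean_space set"
  assumes E: "subspace E" and u: "u \<in> E"
  shows "u \<in> normal_cone (proj_onto E ` K) (proj_onto E x) \<longleftrightarrow> u \<in> normal_cone K x"
  using proj_inner[OF E u] by (simp add: normal_cone_def inner_diff_right)

lemma indep2:
  fixes u v :: "'a::euclidean_space"
  assumes "u \<noteq> v"
  shows "independent {u, v} \<longleftrightarrow> v \<noteq> 0 \<and> u \<notin> span {v}"
  using assms by (simp add: independent_insert)

lemma ext_rel_iff:
  fixes K E :: "'a::euclidean_space set"
  assumes K: "convex_body K" and E: "subspace E" and z1: "norm z = 1"
    and x0: "x0 \<in> supp_set K z"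
  shows "z \<in> ext_rel E (proj_onto E ` K) \<longleftrightarrow> z \<in> E \<and> Dir (normal_cone K x0) z \<inter> E \<subseteq> span {z}"
proof
  let ?P = "proj_onto E" and ?M = "proj_onto E ` K"
  assume zr: "z \<in> ext_rel E ?M"
  then have zE: "z \<in> E" by (simp add: ext_rel_def)
  from zr obtain x' where x': "x' \<in> ?M" "z \<in> normal_cone ?M x'"
    and nd: "\<not> (\<exists>u v. u \<in> normal_cone ?M x' \<inter> E \<and> v \<in> normal_cone ?M x' \<inter> E \<and>
               u \<noteq> v \<and> independent {u, v} \<and> z = u + v)"
    unfolding ext_rel_def by blast
  obtain x where x: "x \<in> K" "x' = ?P x" using x' by blast
  have zx: "z \<in> normal_cone K x" using x' x nc_proj[OF E zE] by simp
  then have xs: "x \<in> supp_set K z" using supp_set_iff[OF K] x by simp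
  have DD: "Dir (normal_cone K x0) z = Dir (normal_cone K x) z" by (rule Dir_nc_eq[OF K x0 xs])
  interpret ccone "normal_cone K x" by (rule nc_ccone)
  have "d \<in> span {z}" if d: "d \<in> Dir (normal_cone K x) z" "d \<in> E" for d
  proof (rule ccontr)
    assume dn: "d \<notin> span {z}"
    obtain \<epsilon> where ep: "\<epsilon> > 0" "z + \<epsilon> *\<^sub>R d \<in> normal_cone K x" "z - \<epsilon> *\<^sub>R d \<in> normal_cone K x"
      using d unfolding Dir_def by auto
    define u where "u = (1/2) *\<^sub>R (z + \<epsilon> *\<^sub>R d)"
    define v where "v = (1/2) *\<^sub>R (z - \<epsilon> *\<^sub>R d)"
    have uE: "u \<in> E" "v \<in> E" using zE d E by (auto simp: u_def v_def intro!: subspace_scale subspace_add subspace_diff)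
    have uN: "u \<in> normal_cone K x" "v \<in> normal_cone K x" using ep by (auto simp: u_def v_def intro!: scale)
    have uM: "u \<in> normal_cone ?M x'" "v \<in> normal_cone ?M x'"
      using uN uE nc_proj[OF E] x by auto
    have zuv: "z = u + v"
    proof -
      have "u + v = (1/2) *\<^sub>R ((z + \<epsilon> *\<^sub>R d) + (z - \<epsilon> *\<^sub>R d))"
        unfolding u_def v_def by (simp only: scaleR_add_right)
      also have "(z + \<epsilon> *\<^sub>R d) + (z - \<epsilon> *\<^sub>R d) = z + z" by simp
      finally show ?thesis by (simp only: scaleR_half_double)
    qed
    have d0: "d \<noteq> 0" using dn span_zero by auto
    have "u - v = \<epsilon> *\<^sub>R d"
    proof -
      have "u - v = (1/2) *\<^sub>R ((z + \<epsilon> *\<^sub>R d) - (z - \<epsilon> *\<^sub>R d))"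
        unfolding u_def v_def by (simp only: scaleR_diff_right)
      also have "(z + \<epsilon> *\<^sub>R d) - (z - \<epsilon> *\<^sub>R d) = \<epsilon> *\<^sub>R d + \<epsilon> *\<^sub>R d" by simp
      finally show ?thesis by (simp only: scaleR_half_double)
    qed
    then have uv: "u \<noteq> v" using ep d0 by auto
    have v0: "v \<noteq> 0"
    proof
      assume "v = 0"
      then have "z = \<epsilon> *\<^sub>R d" by (simp add: v_def)
      then have "d = (1/\<epsilon>) *\<^sub>R z" using ep by simp
      then show False using dn by (metis span_base span_scale singletonI)
    qed
    have us: "u \<notin> span {v}"
    proof
      assume "u \<in> span {v}"
      then obtain c where c: "u = c *\<^sub>R v" by (auto simp: span_singleton)
      have u2: "z + \<epsilon> *\<^sub>R d = 2 *\<^sub>R u" and v2: "z - \<epsilon> *\<^sub>R d = 2 *\<^sub>R v" by (simp_all add: u_def v_def)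
      have "z + \<epsilon> *\<^sub>R d = c *\<^sub>R (z - \<epsilon> *\<^sub>R d)" unfolding u2 v2 c by simp
      then have eq: "(1 - c) *\<^sub>R z = (- (1 + c) * \<epsilon>) *\<^sub>R d" by (simp add: algebra_simps)
      show False
      proof (cases "c = -1")
        case True
        then have "z = 0" using eq by simp
        then show False using z1 by simp
      next
        case False
        then have "(- (1 + c) * \<epsilon>) \<noteq> 0" using ep by simp
        then have "d = (1 / (- (1 + c) * \<epsilon>)) *\<^sub>R ((1 - c) *\<^sub>R z)" using eq by simp
        then show False using dn by (metis span_base span_scale singletonI)
      qed
    qed
    have "independent {u, v}" using indep2[OF uv] v0 us by simp
    then show False using nd uM uE uv zuv by blast
  qed
  then show "z \<in> E \<and> Dir (normal_cone K x0) z \<inter> E \<subseteq> span {z}" using zE DD by auto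
next
  let ?P = "proj_onto E" and ?M = "proj_onto E ` K"
  assume a: "z \<in> E \<and> Dir (normal_cone K x0) z \<inter> E \<subseteq> span {z}"
  then have zE: "z \<in> E" by simp
  have x0K: "x0 \<in> K" and zN: "z \<in> normal_cone K x0" using supp_set_iff[OF K] x0 by auto
  interpret ccone "normal_cone K x0" by (rule nc_ccone)
  have zM: "z \<in> normal_cone ?M (?P x0)" using nc_proj[OF E zE] zN by simp
  have bd: "\<not> (\<exists>e>0. ball (?P x0) e \<inter> E \<subseteq> ?M)"
  proof
    assume "\<exists>e>0. ball (?P x0) e \<inter> E \<subseteq> ?M"
    then obtain e where e: "e > 0" "ball (?P x0) e \<inter> E \<subseteq> ?M" by blast
    define w where "w = ?P x0 + (e/2) *\<^sub>R z"
    have "w \<in> ball (?P x0) e" using e z1 by (simp add: w_def dist_norm)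
    moreover have "w \<in> E" using proj_props[OF E] zE E by (auto simp: w_def intro!: subspace_add subspace_scale)
    ultimately have "w \<in> ?M" using e by blast
    then have "z \<bullet> (w - ?P x0) \<le> 0" using zM by (auto simp: normal_cone_def)
    moreover have "z \<bullet> (w - ?P x0) = e/2" using z1 by (simp add: w_def norm_eq_1)
    ultimately show False using e by simp
  qed
  have nd: "\<not> (\<exists>u v. u \<in> normal_cone ?M (?P x0) \<inter> E \<and> v \<in> normal_cone ?M (?P x0) \<inter> E \<and>
               u \<noteq> v \<and> independent {u, v} \<and> z = u + v)"
  proof
    assume "\<exists>u v. u \<in> normal_cone ?M (?P x0) \<inter> E \<and> v \<in> normal_cone ?M (?P x0) \<inter> E \<and>
               u \<noteq> v \<and> independent {u, v} \<and> z = u + v"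
    then obtain u v where uv: "u \<in> normal_cone ?M (?P x0)" "u \<in> E" "v \<in> normal_cone ?M (?P x0)" "v \<in> E"
      "u \<noteq> v" "independent {u, v}" "z = u + v" by blast
    have uN: "u \<in> normal_cone K x0" "v \<in> normal_cone K x0" using uv nc_proj[OF E] by auto
    have "z + 1 *\<^sub>R (u - v) = 2 *\<^sub>R u" "z - 1 *\<^sub>R (u - v) = 2 *\<^sub>R v" using uv(7) by (simp_all add: algebra_simps scaleR_2)
    then have "u - v \<in> Dir (normal_cone K x0) z" unfolding Dir_def using uN
      by (intro CollectI exI[of _ 1]) (simp add: scale)
    moreover have "u - v \<in> E" using uv E by (simp add: subspace_diff)
    ultimately have "u - v \<in> span {z}" using a by blast
    then obtain c where c: "u - v = c *\<^sub>R (u + v)" using uv(7) by (auto simp: span_singleton)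
    then have eq: "(1 - c) *\<^sub>R u = (1 + c) *\<^sub>R v" by (simp add: algebra_simps)
    have v0: "v \<noteq> 0" and us: "u \<notin> span {v}" using indep2[OF uv(5)] uv(6) by auto
    show False
    proof (cases "c = 1")
      case True
      then show False using eq v0 by simp
    next
      case False
      then have "u = ((1 + c) / (1 - c)) *\<^sub>R v" using eq
        by (metis (no_types, lifting) divide_inverse eq_vector_fraction_iff right_minus_eq scaleR_scaleR)
      then show False using us by (metis span_base span_scale singletonI)
    qed
  qed
  show "z \<in> ext_rel E ?M"
    unfolding ext_rel_def using zE z1 x0K zM bd nd by blast
qed



lemma perp_dim:
  fixes U :: "'a::euclidean_space set"
  assumes U: "subspace U"
  shows "dim U + dim (U\<^sup>\<bottom>) = DIM('a)"
proof -
  have "dim {x + y |x y. x \<in> U \<and> y \<in> U\<^sup>\<bottom>} + dim (U \<inter> U\<^sup>\<bottom>) = dim U + dim (U\<^sup>\<bottom>)"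
    by (rule dim_sums_Int[OF U subspace_orthogonal_comp])
  moreover have "{x + y |x y. x \<in> U \<and> y \<in> U\<^sup>\<bottom>} = U + U\<^sup>\<bottom>"
    unfolding set_plus_def by blast
  moreover have "U + U\<^sup>\<bottom> = UNIV" using subspace_sum_orthogonal_comp[OF U] .
  moreover have "U \<inter> U\<^sup>\<bottom> = {0}" by (rule orthogonal_Int_0[OF U])
  ultimately show ?thesis by simp
qed

lemma perp_span:
  fixes X :: "'a::euclidean_space set"
  shows "(span X)\<^sup>\<bottom> = X\<^sup>\<bottom>"
proof
  show "(span X)\<^sup>\<bottom> \<subseteq> X\<^sup>\<bottom>" by (rule orthogonal_comp_anti_mono[OF span_superset])
  show "X\<^sup>\<bottom> \<subseteq> (span X)\<^sup>\<bottom>"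
  proof
    fix x assume x: "x \<in> X\<^sup>\<bottom>"
    have "X \<subseteq> {y. x \<bullet> y = 0}" using x by (auto simp: orthogonal_comp_def orthogonal_def inner_commute)
    then have "span X \<subseteq> {y. x \<bullet> y = 0}" by (rule span_minimal) (rule subspace_hyperplane)
    then show "x \<in> (span X)\<^sup>\<bottom>" by (auto simp: orthogonal_comp_def orthogonal_def inner_commute)
  qed
qed

lemma perp_Un: "(A \<union> B)\<^sup>\<bottom> = A\<^sup>\<bottom> \<inter> B\<^sup>\<bottom>"
  by (auto simp: orthogonal_comp_def)

lemma hyp_inter_dim:
  fixes H :: "nat \<Rightarrow> 'a::euclidean_space set"
  assumes "finite I" "\<forall>i\<in>I. lin_hyperplane (H i)"
  shows "DIM('a) \<le> dim (\<Inter>i\<in>I. H i) + card I \<and> subspace (\<Inter>i\<in>I. H i)"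
  using assms
proof (induction I rule: finite_induct)
  case empty
  then show ?case by simp
next
  case (insert i I)
  have Hi: "subspace (H i)" "dim (H i) = DIM('a) - 1" using insert.prems by (auto simp: lin_hyperplane_def)
  have IH: "DIM('a) \<le> dim (\<Inter>i\<in>I. H i) + card I" "subspace (\<Inter>i\<in>I. H i)" using insert by auto
  let ?X = "\<Inter>i\<in>I. H i"
  have "dim {x + y |x y. x \<in> H i \<and> y \<in> ?X} + dim (H i \<inter> ?X) = dim (H i) + dim ?X"
    by (rule dim_sums_Int[OF Hi(1) IH(2)])
  moreover have "dim {x + y |x y. x \<in> H i \<and> y \<in> ?X} \<le> DIM('a)" using dim_subset_UNIV by simp
  moreover have "DIM('a) \<ge> 1" by (simp add: DIM_positive Suc_leI)
  ultimately have "DIM('a) \<le> dim (H i \<inter> ?X) + (card I + 1)"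
    using IH Hi by linarith
  moreover have "(\<Inter>i\<in>insert i I. H i) = H i \<inter> ?X" by simp
  moreover have "card (insert i I) = card I + 1" using insert by simp
  ultimately have "DIM('a) \<le> dim (\<Inter>i\<in>insert i I. H i) + card (insert i I)"
    by simp
  moreover have "subspace (\<Inter>i\<in>insert i I. H i)" using Hi IH by (simp add: subspace_inter)
  ultimately show ?case by blast
qed

lemma extend_sub:
  fixes P W :: "'a::euclidean_space set"
  assumes "subspace P" "subspace W" "P \<subseteq> W" "dim P + d \<le> dim W"
  shows "\<exists>E. subspace E \<and> P \<subseteq> E \<and> E \<subseteq> W \<and> dim E = dim P + d"
  using assms
proof (induction d arbitrary: P)
  case 0
  then show ?case by auto
next
  case (Suc d)
  have "\<not> W \<subseteq> P"
  proof
    assume "W \<subseteq> P" then have "dim W \<le> dim P" by (rule dim_subset)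
    then show False using Suc.prems by simp
  qed
  then obtain w where w: "w \<in> W" "w \<notin> P" by blast
  define P' where "P' = span (insert w P)"
  have sP: "span P = P" using Suc.prems by (simp add: span_eq_iff)
  have "w \<notin> span P" using w(2) sP by metis
  then have "dim P' = dim P + 1" by (simp add: P'_def dim_insert)
  moreover have "subspace P'" by (simp add: P'_def)
  moreover have "P \<subseteq> P'" by (auto simp: P'_def span_base)
  moreover have "P' \<subseteq> W" unfolding P'_def using w Suc.prems by (intro span_minimal) auto
  ultimately obtain E where "subspace E" "P' \<subseteq> E" "E \<subseteq> W" "dim E = dim P' + d"
    using Suc.IH[of P'] Suc.prems by auto
  then show ?case using \<open>P \<subseteq> P'\<close> \<open>dim P' = dim P + 1\<close> by (intro exI[of _ E]) auto
qed

lemma pick_vecs: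
  fixes A B :: "'a::euclidean_space set"
  assumes "k + dim B \<le> dim (A \<union> B)"
  shows "\<exists>u. (\<forall>i<k. u i \<in> A \<and> u i \<noteq> 0) \<and> dim (B \<union> u ` {..<k}) = dim B + k"
  using assms
proof (induction k)
  case 0
  then show ?case by simp
next
  case (Suc k)
  then obtain u where u: "\<forall>i<k. u i \<in> A \<and> u i \<noteq> 0" "dim (B \<union> u ` {..<k}) = dim B + k" by auto
  let ?U = "B \<union> u ` {..<k}"
  have "\<not> A \<subseteq> span ?U"
  proof
    assume "A \<subseteq> span ?U"
    then have "A \<union> B \<subseteq> span ?U" by (auto simp: span_base)
    then have "dim (A \<union> B) \<le> dim (span ?U)" by (rule dim_subset)
    then show False using u Suc.prems by simp
  qed
  then obtain a where a: "a \<in> A" "a \<notin> span ?U" by blast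
  have a0: "a \<noteq> 0" using a span_zero by auto
  define u' where "u' = u(k := a)"
  have img: "u' ` {..<Suc k} = insert a (u ` {..<k})"
    by (auto simp: u'_def lessThan_Suc image_def)
  have "B \<union> u' ` {..<Suc k} = insert a ?U" using img by auto
  then have "dim (B \<union> u' ` {..<Suc k}) = dim B + Suc k" using a u by (simp add: dim_insert)
  moreover have "\<forall>i<Suc k. u' i \<in> A \<and> u' i \<noteq> 0" using u a a0 by (auto simp: u'_def less_Suc_eq)
  ultimately show ?case by blast
qed



lemma LA:
  fixes S P :: "'a::euclidean_space set" and z :: 'a and j :: nat
  assumes S: "subspace S" and P: "subspace P" and zS: "z \<in> S" and zP: "z \<in> P" and z0: "z \<noteq> 0"
    and dP: "dim P \<le> 2" and j1: "1 \<le> j" and jn: "j + 2 \<le> DIM('a)"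
  shows "(\<exists>Es. (\<forall>i<DIM('a) - 1. lin_hyperplane (Es i) \<and> (if i < j then S else P) \<subseteq> Es i)
              \<and> dim (\<Inter>i\<in>{..<DIM('a) - 1}. Es i) = 1)
     \<longleftrightarrow> (\<exists>E. subspace E \<and> dim E = j + 1 \<and> P \<subseteq> E \<and> S \<inter> E \<subseteq> span {z})"
proof
  assume "\<exists>Es. (\<forall>i<DIM('a) - 1. lin_hyperplane (Es i) \<and> (if i < j then S else P) \<subseteq> Es i)
              \<and> dim (\<Inter>i\<in>{..<DIM('a) - 1}. Es i) = 1"
  then obtain Es where Es: "\<And>i. i < DIM('a) - 1 \<Longrightarrow> lin_hyperplane (Es i)"
    "\<And>i. i < DIM('a) - 1 \<Longrightarrow> (if i < j then S else P) \<subseteq> Es i"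
    and dX: "dim (\<Inter>i\<in>{..<DIM('a) - 1}. Es i) = 1" by blast
  define I2 where "I2 = {j..<DIM('a) - 1}"
  define W where "W = (\<Inter>i\<in>I2. Es i)"
  have cI2: "card I2 = DIM('a) - 1 - j" by (simp add: I2_def)
  have hW: "DIM('a) \<le> dim W + card I2 \<and> subspace W"
    unfolding W_def by (rule hyp_inter_dim) (use Es in \<open>auto simp: I2_def\<close>)
  then have dW: "j + 1 \<le> dim W" and sW: "subspace W" using cI2 jn by auto
  have PW: "P \<subseteq> W" unfolding W_def I2_def using Es(2) by fastforce
  have "dim P + (j + 1 - dim P) \<le> dim W" using dW dP j1 by simp
  then obtain E where E: "subspace E" "P \<subseteq> E" "E \<subseteq> W" "dim E = dim P + (j + 1 - dim P)"
    using extend_sub[OF P sW PW] by blast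
  have dE: "dim E = j + 1" using E(4) dP j1 by simp
  define X where "X = (\<Inter>i\<in>{..<DIM('a) - 1}. Es i)"
  have sX: "subspace X" unfolding X_def
    by (rule subspace_Int) (use Es(1) in \<open>auto simp: lin_hyperplane_def\<close>)
  have SEX: "S \<inter> E \<subseteq> X"
  proof
    fix x assume x: "x \<in> S \<inter> E"
    show "x \<in> X" unfolding X_def
    proof
      fix i assume i: "i \<in> {..<DIM('a) - 1}"
      show "x \<in> Es i"
      proof (cases "i < j")
        case True then show ?thesis using Es(2)[of i] i x by auto
      next
        case False then have "i \<in> I2" using i by (auto simp: I2_def)
        then show ?thesis using x E(3) by (auto simp: W_def)
      qed
    qed
  qed
  have zX: "z \<in> X" using SEX zS zP E(2) by auto
  have "span {z} = X"
  proof (rule subspace_dim_equal)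
    show "span {z} \<subseteq> X" using zX sX by (simp add: span_minimal)
    show "dim X \<le> dim (span {z})" using dX z0 by (simp add: X_def)
  qed (use sX in auto)
  then have "S \<inter> E \<subseteq> span {z}" using SEX by simp
  then show "\<exists>E. subspace E \<and> dim E = j + 1 \<and> P \<subseteq> E \<and> S \<inter> E \<subseteq> span {z}"
    using E(1,2) dE by blast
next
  assume "\<exists>E. subspace E \<and> dim E = j + 1 \<and> P \<subseteq> E \<and> S \<inter> E \<subseteq> span {z}"
  then obtain E where E: "subspace E" "dim E = j + 1" "P \<subseteq> E" "S \<inter> E \<subseteq> span {z}" by blast
  define n where "n = DIM('a)"
  define m where "m = n - 1 - j"
  have dEp: "dim (E\<^sup>\<bottom>) = m" using perp_dim[OF E(1)] E(2) jn by (simp add: m_def n_def)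
  obtain b where b: "\<forall>i<m. b i \<in> E\<^sup>\<bottom> \<and> b i \<noteq> 0" "dim ({} \<union> b ` {..<m}) = dim ({}::'a set) + m"
    using pick_vecs[of m "{}" "E\<^sup>\<bottom>"] dEp by auto
  define Bs where "Bs = b ` {..<m}"
  have dBs: "dim Bs = m" using b(2) by (simp add: Bs_def)
  have spBs: "span Bs = E\<^sup>\<bottom>"
  proof (rule subspace_dim_equal)
    show "span Bs \<subseteq> E\<^sup>\<bottom>" using b(1) by (intro span_minimal subspace_orthogonal_comp) (auto simp: Bs_def)
    show "dim (E\<^sup>\<bottom>) \<le> dim (span Bs)" using dBs dEp by simp
  qed (auto simp: subspace_orthogonal_comp)
  define Y0 where "Y0 = span (S\<^sup>\<bottom> \<union> Bs)"
  have "Y0\<^sup>\<bottom> = S \<inter> E"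
  proof -
    have "Y0\<^sup>\<bottom> = (S\<^sup>\<bottom>)\<^sup>\<bottom> \<inter> Bs\<^sup>\<bottom>" by (simp add: Y0_def perp_span perp_Un)
    also have "Bs\<^sup>\<bottom> = (span Bs)\<^sup>\<bottom>" by (simp add: perp_span)
    also have "\<dots> = E" using spBs orthogonal_comp_self[OF E(1)] by simp
    finally show ?thesis using orthogonal_comp_self[OF S] by simp
  qed
  moreover have "dim (S \<inter> E) \<le> 1"
    using dim_subset[OF E(4)] z0 by simp
  ultimately have "dim Y0 + 1 \<ge> n"
    using perp_dim[of Y0] by (simp add: Y0_def n_def)
  then have "j + dim Bs \<le> dim (S\<^sup>\<bottom> \<union> Bs)" using dBs jn by (simp add: Y0_def m_def n_def)
  then obtain u where u: "\<forall>i<j. u i \<in> S\<^sup>\<bottom> \<and> u i \<noteq> 0" "dim (Bs \<union> u ` {..<j}) = dim Bs + j"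
    using pick_vecs[of j Bs "S\<^sup>\<bottom>"] by blast
  define Y where "Y = Bs \<union> u ` {..<j}"
  have dY: "dim Y = n - 1" using u(2) dBs jn by (simp add: Y_def m_def n_def)
  define Es where "Es i = (if i < j then {x. u i \<bullet> x = 0} else {x. b (i - j) \<bullet> x = 0})" for i
  have hyp: "lin_hyperplane (Es i)" if "i < n - 1" for i
  proof (cases "i < j")
    case True then show ?thesis using u(1) by (simp add: Es_def lin_hyperplane_def subspace_hyperplane dim_hyperplane)
  next
    case False
    then have "i - j < m" using that by (simp add: m_def)
    then show ?thesis using b(1) False by (simp add: Es_def lin_hyperplane_def subspace_hyperplane dim_hyperplane)
  qed
  have cont: "(if i < j then S else P) \<subseteq> Es i" if "i < n - 1" for i
  proof (cases "i < j")
    case True then show ?thesis using u(1)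
      by (auto simp: Es_def orthogonal_comp_def orthogonal_def inner_commute)
  next
    case False
    then have "i - j < m" using that by (simp add: m_def)
    then have "b (i - j) \<in> E\<^sup>\<bottom>" using b(1) by simp
    then have "E \<subseteq> Es i" using False by (auto simp: Es_def orthogonal_comp_def orthogonal_def inner_commute)
    then show ?thesis using False E(3) by simp
  qed
  have inter: "(\<Inter>i\<in>{..<n - 1}. Es i) = Y\<^sup>\<bottom>"
  proof (intro equalityI subsetI)
    fix x assume x: "x \<in> (\<Inter>i\<in>{..<n - 1}. Es i)"
    have "y \<bullet> x = 0" if y: "y \<in> Y" for y
    proof -
      from y consider k where "k < m" "y = b k" | k where "k < j" "y = u k"
        by (auto simp: Y_def Bs_def)
      then show ?thesis
      proof cases
        case 1
        then have "k + j < n - 1" by (simp add: m_def)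
        then have "x \<in> Es (k + j)" using x by blast
        then show ?thesis using 1 by (simp add: Es_def)
      next
        case 2
        then have "k < n - 1" using jn by (simp add: n_def)
        then have "x \<in> Es k" using x by blast
        then show ?thesis using 2 by (simp add: Es_def)
      qed
    qed
    then show "x \<in> Y\<^sup>\<bottom>" by (simp add: orthogonal_comp_def orthogonal_def)
  next
    fix x assume x: "x \<in> Y\<^sup>\<bottom>"
    then have yx: "y \<bullet> x = 0" if "y \<in> Y" for y using that by (simp add: orthogonal_comp_def orthogonal_def)
    show "x \<in> (\<Inter>i\<in>{..<n - 1}. Es i)"
    proof
      fix i assume i: "i \<in> {..<n - 1}"
      show "x \<in> Es i"
      proof (cases "i < j")
        case True then have "u i \<in> Y" by (simp add: Y_def)
        then show ?thesis using yx True by (simp add: Es_def)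
      next
        case False then have "i - j < m" using i by (simp add: m_def)
        then have "b (i - j) \<in> Y" by (simp add: Y_def Bs_def)
        then show ?thesis using yx False by (simp add: Es_def)
      qed
    qed
  qed
  have "dim (Y\<^sup>\<bottom>) = 1"
  proof -
    have "dim (span Y) + dim ((span Y)\<^sup>\<bottom>) = n" using perp_dim[of "span Y"] by (simp add: n_def)
    then show ?thesis using dY jn by (simp add: perp_span n_def)
  qed
  then show "\<exists>Es. (\<forall>i<DIM('a) - 1. lin_hyperplane (Es i) \<and> (if i < j then S else P) \<subseteq> Es i)
              \<and> dim (\<Inter>i\<in>{..<DIM('a) - 1}. Es i) = 1"
    using hyp cont inter by (intro exI[of _ Es]) (simp add: n_def)
qed



lemma hyp_span_iff: "lin_hyperplane H \<Longrightarrow> (T \<subseteq> H \<longleftrightarrow> span T \<subseteq> H)"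
  unfolding lin_hyperplane_def by (meson span_minimal span_superset order_trans)

theorem lemma3p11:
  fixes K :: "(real ^ 'n) set" and k :: 'n and j :: nat
  assumes "CARD('n) \<ge> 3"
    and "1 \<le> j" and "j \<le> CARD('n) - 2"
    and "convex_body K"
  defines "e \<equiv> axis k (1::real)"
  defines "BL \<equiv> cball 0 1 \<inter> {x. x \<bullet> e = 0}"
  shows "ext_mixed (\<lambda>i. if i < j then K else BL) =
         {z. norm z = 1 \<and> (\<exists>E \<in> grass_thru e (j + 1). z \<in> ext_rel E (proj_onto E ` K))}"
proof (intro set_eqI iffI)
  have ee: "norm e = 1" by (simp add: e_def)
  have jn: "j + 2 \<le> DIM(real ^ 'n)" using assms(1,3) by simp
  have K: "convex_body K" by fact
  {
    fix z :: "real ^ 'n" assume z1: "norm z = 1"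
    have z0: "z \<noteq> 0" using z1 by auto
    obtain x0 where x0: "x0 \<in> supp_set K z" using supp_set_ne[OF K] by blast
    define S where "S = span (touching_cone K z)"
    have SD: "S = Dir (normal_cone K x0) z" unfolding S_def by (rule span_touching[OF K x0])
    have zN: "z \<in> normal_cone K x0" using x0 supp_set_iff[OF K] by simp
    have zS: "z \<in> S" unfolding SD using ccone.z_Dir[OF nc_ccone zN] .
    define P where "P = span {e, z}"
    have PB: "span (touching_cone BL z) = P" unfolding BL_def P_def by (rule span_touching_BL[OF ee])
    have dP: "dim P \<le> 2"
    proof -
      have "dim P = dim {e, z}" by (simp add: P_def)
      also have "\<dots> \<le> card {e, z}" by (rule dim_le_card') simp
      also have "\<dots> \<le> 2" by (simp add: card_insert_if)
      finally show ?thesis .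
    qed
    have zP: "z \<in> P" by (simp add: P_def span_base)
    have LA': "(\<exists>Es. (\<forall>i<DIM(real ^ 'n) - 1. lin_hyperplane (Es i) \<and> (if i < j then S else P) \<subseteq> Es i)
              \<and> dim (\<Inter>i\<in>{..<DIM(real ^ 'n) - 1}. Es i) = 1)
     \<longleftrightarrow> (\<exists>E. subspace E \<and> dim E = j + 1 \<and> P \<subseteq> E \<and> S \<inter> E \<subseteq> span {z})"
      by (rule LA) (use zS zP z0 dP assms(2) jn in \<open>auto simp: S_def P_def\<close>)
    have L: "z \<in> ext_mixed (\<lambda>i. if i < j then K else BL) \<longleftrightarrow>
      (\<exists>Es. (\<forall>i<DIM(real ^ 'n) - 1. lin_hyperplane (Es i) \<and> (if i < j then S else P) \<subseteq> Es i)
              \<and> dim (\<Inter>i\<in>{..<DIM(real ^ 'n) - 1}. Es i) = 1)"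
    proof -
      have "lin_hyperplane H \<Longrightarrow> touching_cone (if i < j then K else BL) z \<subseteq> H \<longleftrightarrow> (if i < j then S else P) \<subseteq> H" for H i
        using hyp_span_iff[of H] by (auto simp: S_def PB[symmetric])
      then show ?thesis unfolding ext_mixed_def using z1 by (auto cong: conj_cong)
    qed
    have R: "(\<exists>E \<in> grass_thru e (j + 1). z \<in> ext_rel E (proj_onto E ` K)) \<longleftrightarrow>
      (\<exists>E. subspace E \<and> dim E = j + 1 \<and> P \<subseteq> E \<and> S \<inter> E \<subseteq> span {z})"
    proof -
      have "z \<in> ext_rel E (proj_onto E ` K) \<longleftrightarrow> z \<in> E \<and> S \<inter> E \<subseteq> span {z}" if "subspace E" for E
        using ext_rel_iff[OF K that z1 x0] SD by simp
      moreover have "P \<subseteq> E \<longleftrightarrow> e \<in> E \<and> z \<in> E" if "subspace E" for E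
      proof
        assume "P \<subseteq> E" then show "e \<in> E \<and> z \<in> E" unfolding P_def using span_base by blast
      next
        assume "e \<in> E \<and> z \<in> E" then show "P \<subseteq> E" unfolding P_def using that by (intro span_minimal) auto
      qed
      ultimately show ?thesis unfolding grass_thru_def by blast
    qed
    have "z \<in> ext_mixed (\<lambda>i. if i < j then K else BL) \<longleftrightarrow>
        (\<exists>E \<in> grass_thru e (j + 1). z \<in> ext_rel E (proj_onto E ` K))"
      using L LA' R by simp
  } note main = this
  fix z :: "real ^ 'n"
  show "z \<in> ext_mixed (\<lambda>i. if i < j then K else BL) \<Longrightarrow>
         z \<in> {z. norm z = 1 \<and> (\<exists>E \<in> grass_thru e (j + 1). z \<in> ext_rel E (proj_onto E ` K))}"
    using main by (auto simp: ext_mixed_def)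
  show "z \<in> {z. norm z = 1 \<and> (\<exists>E \<in> grass_thru e (j + 1). z \<in> ext_rel E (proj_onto E ` K))} \<Longrightarrow>
         z \<in> ext_mixed (\<lambda>i. if i < j then K else BL)"
    using main by auto
qed

end
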